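(* Let $n\geq 2$ and let $f,h:S^1\to S^1$ be orientation-preserving homeomorphisms satisfying $h\circ f\circ h^{-1}=f^n$. Then there exists $l\in\mathbb{N}$ such that the rotation number of $f$ is $\rho(f)=\frac{l}{n-1}$.
   Context: $\rho(f)$ denotes the Poincaré rotation number of an orientation-preserving circle homeomorphism, taken in $\mathbb{R}/\mathbb{Z}$. *)

theory Defs
  imports "HOL-Analysis.Analysis"
begin

text \<open>The circle S^1 is the unit circle in the complex plane; the covering map
  from the real line is t maps to cis(2 pi t).\<close>

definition circ :: "real \<Rightarrow> complex" where
  "circ t = cis (2 * pi * t)"

definition is_lift :: "(complex \<Rightarrow> complex) \<Rightarrow> (real \<Rightarrow> real) \<Rightarrow> bool" where
  "is_lift f F \<longleftrightarrow> continuous_on UNIV F \<and> (\<forall>x. f (circ x) = circ (F x))"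

definition op_circle_homeo :: "(complex \<Rightarrow> complex) \<Rightarrow> bool" where
  "op_circle_homeo f \<longleftrightarrow>
     (\<exists>g. homeomorphism (sphere 0 1) (sphere 0 1) f g) \<and>
     (\<exists>F. is_lift f F \<and> strict_mono F)"

text \<open>Poincare rotation number, as an element of [0,1) representing R/Z:
  fractional part of the translation number lim (F^k(0))/k of an increasing lift F.\<close>
definition rot_num :: "(complex \<Rightarrow> complex) \<Rightarrow> real" where
  "rot_num f = (let F = (SOME F. is_lift f F \<and> strict_mono F)
                in frac (lim (\<lambda>k. (F ^^ k) 0 / real k)))"

end

theory Submission imports Defs begin

lemma circ_eq_iff: "circ a = circ b \<longleftrightarrow> a - b \<in> \<int>"
proof -
  have "circ a = circ b \<longleftrightarrow> (\<exists>n::int. \<i> * complex_of_real (2*pi*a) = \<i> * complex_of_real (2*pi*b) + (of_int (2 * n) * pi) * \<i>)"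
    unfolding circ_def cis_conv_exp by (rule exp_eq)
  also have "\<dots> \<longleftrightarrow> (\<exists>n::int. a = b + n)"
  proof (intro ex_cong1)
    fix n :: int
    have "\<i> * complex_of_real (2*pi*a) = \<i> * complex_of_real (2*pi*b) + (of_int (2 * n) * pi) * \<i>
       \<longleftrightarrow> \<i> * complex_of_real (2*pi*a) = \<i> * complex_of_real (2*pi*b + 2*pi*n)"
      by (simp add: algebra_simps)
    also have "\<dots> \<longleftrightarrow> complex_of_real (2*pi*a) = complex_of_real (2*pi*b + 2*pi*n)"
      by simp
    also have "\<dots> \<longleftrightarrow> 2*pi*a = 2*pi*(b + n)" by (simp only: of_real_eq_iff) (simp add: algebra_simps)
    also have "\<dots> \<longleftrightarrow> a = b + n" by simp
    finally show "\<i> * complex_of_real (2*pi*a) = \<i> * complex_of_real (2*pi*b) + (of_int (2 * n) * pi) * \<i> \<longleftrightarrow> a = b + n" .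
  qed
  also have "\<dots> \<longleftrightarrow> a - b \<in> \<int>"
    by (metis Ints_cases Ints_of_int add_diff_cancel_left' diff_add_cancel add.commute)
  finally show ?thesis .
qed

lemma circ_add_int: "k \<in> \<int> \<Longrightarrow> circ (x + k) = circ x"
  by (simp add: circ_eq_iff)

lemma circ_in_sphere: "circ x \<in> sphere 0 1"
  by (simp add: circ_def)

lemma int_valued_const:
  fixes g :: "real \<Rightarrow> real"
  assumes "continuous_on UNIV g" "\<And>x. g x \<in> \<int>"
  shows "g x = g y"
proof -
  have "g constant_on UNIV"
  proof (rule continuous_discrete_range_constant[OF connected_UNIV assms(1)])
    fix x :: real
    show "\<exists>e>0. \<forall>y. y \<in> UNIV \<and> g y \<noteq> g x \<longrightarrow> e \<le> norm (g y - g x)"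
    proof (intro exI[of _ 1] conjI allI impI)
      fix y assume "y \<in> UNIV \<and> g y \<noteq> g x"
      moreover obtain a b where "g y = of_int a" "g x = of_int b" using assms(2) by (meson Ints_cases)
      ultimately show "1 \<le> norm (g y - g x)" by auto
    qed simp
  qed
  then show ?thesis by (auto simp: constant_on_def)
qed

lemma lift_deg1:
  assumes L: "is_lift f F" and sm: "strict_mono F" and inj: "inj_on f (sphere 0 1)"
  shows "F (x+1) = F x + 1"
proof -
  have cF: "continuous_on UNIV F" using L by (simp add: is_lift_def)
  have fl: "\<And>x. f (circ x) = circ (F x)" using L by (simp add: is_lift_def)
  define g where "g x = F (x+1) - F x" for x
  have gc: "continuous_on UNIV g" unfolding g_def
    by (intro continuous_intros continuous_on_compose2[OF cF]) auto
  have gi: "g x \<in> \<int>" for x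
  proof -
    have "circ (F (x+1)) = circ (F x)"
      using fl[of "x+1"] fl[of x] circ_add_int[of 1 x] by simp
    then show ?thesis by (simp add: circ_eq_iff g_def)
  qed
  have gconst: "g x = g 0" for x by (rule int_valued_const[OF gc gi])
  have gpos: "g 0 > 0" using sm unfolding g_def strict_mono_def by simp
  obtain d :: int where d: "g 0 = of_int d" using gi[of 0] by (meson Ints_cases)
  have "d \<le> 1"
  proof (rule ccontr)
    assume "\<not> d \<le> 1"
    then have d2: "g 0 \<ge> 2" using d by simp
    have "\<exists>y. 0 \<le> y \<and> y \<le> 1 \<and> F y = F 0 + 1"
      using d2 by (intro IVT' continuous_on_subset[OF cF]) (auto simp: g_def)
    then obtain y where y: "0 \<le> y" "y \<le> 1" "F y = F 0 + 1" by blast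
    have "y \<noteq> 0" using y by auto
    moreover have "y \<noteq> 1" using y d2 by (auto simp: g_def)
    moreover have "circ y = circ 0"
    proof -
      have "f (circ y) = f (circ 0)" using fl[of y] fl[of 0] y(3) circ_add_int[of 1 "F 0"] by simp
      then show ?thesis using inj circ_in_sphere by (meson inj_onD)
    qed
    moreover have "y \<in> \<int>" using circ_eq_iff[of y 0] calculation(3) by simp
    then obtain j where "y = of_int j" by (meson Ints_cases)
    ultimately show False using y by auto
  qed
  then have "g 0 = 1" using d gpos by simp
  then show ?thesis using gconst[of x] by (simp add: g_def)
qed

lemma shift_nat: fixes G :: "real \<Rightarrow> real" assumes "\<And>x. G (x+1) = G x + (1::real)" shows "G (x + real k) = G x + real k"
proof (induction k)
  case 0 then show ?case by simp
next
  case (Suc k)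
  have "G (x + real (Suc k)) = G ((x + real k) + 1)" by (simp add: ac_simps)
  also have "\<dots> = G (x + real k) + 1" by (rule assms)
  finally show ?case using Suc by simp
qed

lemma shift_int: fixes G :: "real \<Rightarrow> real" assumes "\<And>x. G (x+1) = G x + (1::real)" shows "G (x + of_int j) = G x + of_int j"
proof (cases "j \<ge> 0")
  case True then show ?thesis using shift_nat[of G, OF assms, of x "nat j"] by simp
next
  case False
  have "G (x + of_int j + real (nat (-j))) = G (x + of_int j) + real (nat (-j))"
    by (rule shift_nat[of G, OF assms])
  then show ?thesis using False by simp
qed

lemma shift_Ints: fixes G :: "real \<Rightarrow> real" assumes "\<And>x. G (x+1) = G x + (1::real)" "k \<in> \<int>" shows "G (x + k) = G x + k"
  using assms(2) shift_int[of G, OF assms(1)] by (metis Ints_cases)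

lemma funpow_shift: fixes G :: "real \<Rightarrow> real" assumes "\<And>x. G (x+1) = G x + (1::real)" shows "(G^^k) (x+1) = (G^^k) x + 1"
proof (induction k)
  case 0 then show ?case by simp
next
  case (Suc k)
  then show ?case using assms[of "(G^^k) x"] by simp
qed

lemma funpow_mono: assumes "mono (G::real\<Rightarrow>real)" shows "mono (G^^k)"
  using assms by (induction k) (auto simp: mono_def)

lemma funpow_cont: assumes "continuous_on UNIV (G::real\<Rightarrow>real)" shows "continuous_on UNIV (G^^k)"
proof (induction k)
  case 0 then show ?case by (simp add: continuous_on_id)
next
  case (Suc k)
  then show ?case using continuous_on_compose[OF Suc continuous_on_subset[OF assms]]
    by (simp add: o_def)
qed

lemma disp_bound:
  fixes G :: "real \<Rightarrow> real"
  assumes sh: "\<And>x. G (x+1) = G x + (1::real)" and m: "mono G"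
  shows "\<bar>G x - x - G 0\<bar> \<le> 1"
proof -
  have e: "G x = G (frac x) + of_int (floor x)"
    using shift_int[of G, OF sh, of "frac x" "floor x"] by (simp add: frac_def)
  have "G 0 \<le> G (frac x)" "G (frac x) \<le> G 1"
    using m frac_ge_0[of x] frac_lt_1[of x] by (auto simp: mono_def)
  moreover have "G 1 = G 0 + 1" using sh[of 0] by simp
  moreover have "x = frac x + of_int (floor x)" by (simp add: frac_def)
  ultimately show ?thesis using e frac_ge_0[of x] frac_lt_1[of x] by linarith
qed

lemma iter_bound:
  assumes b: "\<And>y. \<bar>G y - y - G 0\<bar> \<le> (1::real)"
  shows "\<bar>(G^^i) 0 - real i * G 0\<bar> \<le> real i"
proof (induction i)
  case 0 then show ?case by simp
next
  case (Suc i)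
  have "\<bar>G ((G^^i) 0) - (G^^i) 0 - G 0\<bar> \<le> 1" by (rule b)
  then show ?case using Suc by (simp add: algebra_simps)
qed

lemma lift_funpow: assumes "is_lift f F" shows "(f^^k) (circ x) = circ ((F^^k) x)"
  using assms by (induction k) (auto simp: is_lift_def)

lemma final_arith:
  fixes mi :: int and n :: nat
  assumes "n \<ge> 2"
  shows "\<exists>l::nat. frac (- real_of_int mi / real (n - 1)) = frac (real l / real (n - 1))"
proof -
  define d where "d = int (n - 1)"
  have dpos: "d > 0" using assms by (simp add: d_def)
  define q where "q = (-mi) div d"
  define r where "r = (-mi) mod d"
  have e: "-mi = q*d + r" by (simp add: q_def r_def)
  have r0: "r \<ge> 0" using dpos by (simp add: r_def)
  have N: "real (n-1) = real_of_int d" by (simp add: d_def)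
  have "- real_of_int mi / real (n - 1) = real_of_int (-mi) / real_of_int d" by (simp add: d_def)
  also have "\<dots> = of_int q + real_of_int r / real_of_int d"
    using dpos by (simp add: e field_simps)
  finally have "frac (- real_of_int mi / real (n - 1)) = frac (real_of_int r / real_of_int d)"
    by simp
  moreover have "real_of_int r = real (nat r)" using r0 by simp
  ultimately show ?thesis using N by metis
qed

theorem mainTheorem2:
  fixes f h :: "complex \<Rightarrow> complex" and n :: nat
  assumes "n \<ge> 2"
    and "op_circle_homeo f" and "op_circle_homeo h"
    and "\<forall>z\<in>sphere 0 1. h (f (inv_into (sphere 0 1) h z)) = (f ^^ n) z"
  shows "\<exists>l::nat. rot_num f = frac (real l / real (n - 1))"
proof -
  define S :: "complex set" where "S = sphere 0 1"
  obtain gf where hf: "homeomorphism S S f gf" using assms(2) by (auto simp: op_circle_homeo_def S_def)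
  obtain gh where hh: "homeomorphism S S h gh" using assms(3) by (auto simp: op_circle_homeo_def S_def)
  define F where "F = (SOME F. is_lift f F \<and> strict_mono F)"
  have ex: "\<exists>F. is_lift f F \<and> strict_mono F" using assms(2) by (auto simp: op_circle_homeo_def)
  have "is_lift f F \<and> strict_mono F"
    unfolding F_def by (rule someI_ex[OF ex])
  then have FL: "is_lift f F" and Fsm: "strict_mono F" by auto
  obtain H where HL: "is_lift h H" and Hsm: "strict_mono H"
    using assms(3) by (auto simp: op_circle_homeo_def)
  have injf: "inj_on f S" using hf by (metis homeomorphism_apply1 inj_on_inverseI)
  have injh: "inj_on h S" using hh by (metis homeomorphism_apply1 inj_on_inverseI)
  have F1: "\<And>x. F (x+1) = F x + 1" using lift_deg1[OF FL Fsm] injf by (simp add: S_def)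
  have H1: "\<And>x. H (x+1) = H x + 1" using lift_deg1[OF HL Hsm] injh by (simp add: S_def)
  have Fm: "mono F" using Fsm by (rule strict_mono_mono)
  have Hm: "mono H" using Hsm by (rule strict_mono_mono)
  have cF: "continuous_on UNIV F" using FL by (simp add: is_lift_def)
  have cH: "continuous_on UNIV H" using HL by (simp add: is_lift_def)
  have fl: "\<And>x. f (circ x) = circ (F x)" using FL by (simp add: is_lift_def)
  have hl: "\<And>x. h (circ x) = circ (H x)" using HL by (simp add: is_lift_def)
  have Fk1: "\<And>k x. (F^^k) (x+1) = (F^^k) x + 1" by (rule funpow_shift[of F, OF F1])
  have Fkm: "\<And>k. mono (F^^k)" by (rule funpow_mono[OF Fm])
  have Fkc: "\<And>k. continuous_on UNIV (F^^k)" by (rule funpow_cont[OF cF])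
  have cc: "circ (H (F x)) = circ ((F^^n) (H x))" for x
  proof -
    have hS: "h (circ x) \<in> sphere 0 1"
      using homeomorphism_image1[OF hh] circ_in_sphere[of x] by (auto simp: S_def)
    have "inv_into (sphere 0 1) h (h (circ x)) = circ x"
      using inv_into_f_f[OF injh[unfolded S_def] circ_in_sphere] .
    then have "h (f (circ x)) = (f^^n) (h (circ x))" using assms(4) hS by metis
    then show ?thesis using fl hl lift_funpow[OF FL] by simp
  qed
  define g where "g x = H (F x) - (F^^n) (H x)" for x
  have gc: "continuous_on UNIV g" unfolding g_def
    by (intro continuous_intros continuous_on_compose2[OF cH] continuous_on_compose2[OF cF]
        continuous_on_compose2[OF Fkc[of n]] cF cH) auto
  have gi: "\<And>x. g x \<in> \<int>" using cc by (simp add: circ_eq_iff g_def)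
  define m where "m = g 0"
  have mI: "m \<in> \<int>" using gi by (simp add: m_def)
  have conj1: "H (F x) = (F^^n) (H x) + m" for x
    using int_valued_const[OF gc gi, of x 0] by (simp add: g_def m_def)
  have conjk: "H ((F^^k) x) = (F^^(n*k)) (H x) + real k * m" for k x
  proof (induction k)
    case 0 then show ?case by simp
  next
    case (Suc k)
    have "H ((F^^Suc k) x) = H (F ((F^^k) x))" by simp
    also have "\<dots> = (F^^n) (H ((F^^k) x)) + m" by (rule conj1)
    also have "\<dots> = (F^^n) ((F^^(n*k)) (H x) + real k * m) + m" using Suc by simp
    also have "\<dots> = (F^^n) ((F^^(n*k)) (H x)) + real k * m + m"
      using shift_Ints[of "F^^n", OF Fk1] mI by simp
    also have "(F^^n) ((F^^(n*k)) (H x)) = (F^^(n*Suc k)) (H x)"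
      by (simp add: funpow_add)
    finally show ?case by (simp add: algebra_simps)
  qed
  define a where "a k = (F^^k) 0" for k
  define A where "A = H 0"
  have main: "\<bar>real (n-1) * a k + real k * m\<bar> \<le> real n + 2" for k
  proof -
    have b1: "\<bar>H (a k) - a k - A\<bar> \<le> 1" unfolding A_def by (rule disp_bound[of H, OF H1 Hm])
    have b2: "\<bar>(F^^(n*k)) A - A - a (n*k)\<bar> \<le> 1" unfolding a_def by (rule disp_bound[of "F^^_", OF Fk1 Fkm])
    have "\<bar>((F^^k)^^n) 0 - real n * (F^^k) 0\<bar> \<le> real n"
      by (rule iter_bound) (rule disp_bound[of "F^^_", OF Fk1 Fkm])
    then have b3: "\<bar>a (n*k) - real n * a k\<bar> \<le> real n" by (simp add: a_def funpow_mult mult.commute)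
    have eq: "H (a k) = (F^^(n*k)) A + real k * m" unfolding a_def A_def by (rule conjk)
    have "real (n-1) = real n - 1" using assms(1) by simp
    then show ?thesis using b1 b2 b3 eq by (simp add: algebra_simps abs_le_iff)
  qed
  define c where "c = - m / real (n-1)"
  have N: "real (n-1) > 0" using assms(1) by simp
  have lim: "(\<lambda>k. a k / real k) \<longlonglongrightarrow> c"
  proof -
    have "(\<lambda>k. a k / real k - c) \<longlonglongrightarrow> 0"
    proof (rule Lim_null_comparison)
      show "(\<lambda>k. ((real n + 2) / real (n-1)) / real k) \<longlonglongrightarrow> 0" by (rule lim_const_over_n)
      show "\<forall>\<^sub>F k in sequentially. norm (a k / real k - c) \<le> ((real n + 2) / real (n-1)) / real k"
      proof (rule eventually_sequentiallyI[of 1])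
        fix k :: nat assume k: "1 \<le> k"
        then have kp: "real k > 0" by simp
        have "a k / real k - c = (real (n-1) * a k + real k * m) / (real (n-1) * real k)"
          using kp N by (simp add: c_def field_simps)
        then have "norm (a k / real k - c) = \<bar>real (n-1) * a k + real k * m\<bar> / (real (n-1) * real k)"
          using kp N by (simp add: abs_divide)
        also have "\<dots> \<le> (real n + 2) / (real (n-1) * real k)"
          using kp N main[of k] by (intro divide_right_mono) auto
        finally show "norm (a k / real k - c) \<le> ((real n + 2) / real (n-1)) / real k" by simp
      qed
    qed
    then show ?thesis using tendsto_add[OF _ tendsto_const[of c]] by fastforce
  qed
  have "rot_num f = frac c"
    unfolding rot_num_def Let_def F_def[symmetric] using limI[OF lim] by (simp add: a_def)
  moreover obtain mi where "m = of_int mi" using mI by (meson Ints_cases)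
  ultimately show ?thesis using final_arith[OF assms(1), of mi] by (simp add: c_def)
qed

end
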